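(* Let $K\ge2$ and let $\mathbf u^*=\{u_i^*\}_{i=1}^K\subset\mathbb R^d$ satisfy $\|u_i^*-u_j^*\|_2\ge100\sqrt{d\log K}$ for all $i\ne j$. If $\mathbf u=\{u_i\}_{i=1}^K\subset\mathbb R^d$ satisfies $d_{\mathrm{TV}}(p_{\mathbf u}(x),p_{\mathbf u^*}(x))\le\frac1{4K}$, then there is a permutation $\pi$ of $[K]$ with $\|u_i^*-u_{\pi(i)}\|_2\le16\sqrt{d\log K}$ for every $i\in[K]$.
   Context: $p_{\mathbf u}(x)=\frac1K\sum_{i=1}^KN(u_i,I_d)$ denotes the equal-weight Gaussian mixture density with centers $\mathbf u$; $d_{\mathrm{TV}}(P,Q)=\frac12\int|p-q|$. *)

theory Defs
  imports "HOL-Analysis.Analysis"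
begin

definition gauss_density :: "real^'n \<Rightarrow> real^'n \<Rightarrow> real" where
  "gauss_density c x = (2 * pi) powr (- real CARD('n) / 2) * exp (- (norm (x - c))\<^sup>2 / 2)"

definition mixture_density :: "nat \<Rightarrow> (nat \<Rightarrow> real^'n) \<Rightarrow> real^'n \<Rightarrow> real" where
  "mixture_density K u x = (1 / real K) * (\<Sum>i<K. gauss_density (u i) x)"

definition tv_dist :: "('a::euclidean_space \<Rightarrow> real) \<Rightarrow> ('a \<Rightarrow> real) \<Rightarrow> real" where
  "tv_dist p q = (1 / 2) * (\<integral>x. \<bar>p x - q x\<bar> \<partial>lborel)"

end

theory Submission imports Defs "HOL-Probability.Distributions" begin

lemma card_Basis_vec: "card (Basis :: (real^'n) set) = CARD('n)"
  using DIM_cart[where 'a=real and 'b='n] by simp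

lemma normsq_sum: "(norm (x::real^'n))\<^sup>2 = (\<Sum>b\<in>Basis. (x \<bullet> b)\<^sup>2)"
proof -
  have "(norm x)\<^sup>2 = x \<bullet> x" by (simp add: power2_norm_eq_inner)
  also have "\<dots> = (\<Sum>b\<in>Basis. (x \<bullet> b) * (x \<bullet> b))" by (rule euclidean_inner)
  finally show ?thesis by (simp add: power2_eq_square)
qed

lemma gauss_prod:
  "gauss_density c (x::real^'n) = (\<Prod>b\<in>Basis. normal_density (c \<bullet> b) 1 (x \<bullet> b))"
proof -
  have "(\<Prod>b\<in>(Basis::(real^'n) set). normal_density (c \<bullet> b) 1 (x \<bullet> b))
     = (\<Prod>b\<in>(Basis::(real^'n) set). (1 / sqrt (2*pi)) * exp (- ((x - c) \<bullet> b)\<^sup>2 / 2))"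
    by (rule prod.cong) (auto simp: normal_density_def inner_diff_left power2_commute)
  also have "\<dots> = (1 / sqrt (2*pi)) ^ CARD('n) * exp (\<Sum>b\<in>(Basis::(real^'n) set). - ((x - c) \<bullet> b)\<^sup>2 / 2)"
    by (simp only: prod.distrib prod_constant card_Basis_vec exp_sum finite_Basis)
  also have "(\<Sum>b\<in>(Basis::(real^'n) set). - ((x - c) \<bullet> b)\<^sup>2 / 2) = - (norm (x-c))\<^sup>2 / 2"
    by (simp add: normsq_sum sum_negf sum_divide_distrib)
  also have "(1 / sqrt (2*pi)) ^ CARD('n) = (2*pi) powr (- real CARD('n) / 2)"
  proof -
    have "(1 / sqrt (2*pi)) = (2*pi) powr (-1/2)"
      by (simp add: powr_minus_divide powr_half_sqrt)
    hence "(1 / sqrt (2*pi)) ^ CARD('n) = ((2*pi) powr (-1/2)) powr real CARD('n)"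
      by (simp add: powr_realpow)
    also have "\<dots> = (2*pi) powr (- real CARD('n) / 2)" by (simp add: powr_powr)
    finally show ?thesis .
  qed
  finally show ?thesis by (simp add: gauss_density_def)
qed

lemma onedim: "exp ((y - m)\<^sup>2 / 4) * normal_density m 1 y = sqrt 2 * normal_density m (sqrt 2) y"
proof -
  have e: "exp ((y - m)\<^sup>2 / 4) * exp (- (y - m)\<^sup>2 / 2) = exp (- (y - m)\<^sup>2 / 4)"
    by (simp add: exp_add[symmetric])
  have s0: "sqrt 2 * sqrt (pi*2) = sqrt (2*(pi*2))" by (rule real_sqrt_mult[symmetric])
  have s: "sqrt (pi * 4) = sqrt 2 * sqrt (pi*2)" using s0 by (simp add: mult_ac)
  show ?thesis unfolding normal_density_def using e
    by (simp add: s field_simps)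
qed

lemma gauss_exp_prod:
  "exp ((norm (x - c))\<^sup>2 / 4) * gauss_density c (x::real^'n)
     = (\<Prod>b\<in>Basis. sqrt 2 * normal_density (c \<bullet> b) (sqrt 2) (x \<bullet> b))"
proof -
  have "exp ((norm (x - c))\<^sup>2 / 4) = (\<Prod>b\<in>(Basis::(real^'n) set). exp ((x \<bullet> b - c \<bullet> b)\<^sup>2 / 4))"
    by (simp add: normsq_sum exp_sum[symmetric] sum_divide_distrib inner_diff_left)
  thus ?thesis
    by (simp add: gauss_prod prod.distrib[symmetric] onedim)
qed

lemma gauss_meas[measurable]: "gauss_density c \<in> borel_measurable borel"
  unfolding gauss_density_def by measurable

lemma gauss_nonneg: "0 \<le> gauss_density c x"
  by (simp add: gauss_density_def)

lemma gauss_hbi: "has_bochner_integral lborel (gauss_density (c::real^'n)) 1"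
proof (rule has_bochner_integral_nn_integral)
  show "(\<integral>\<^sup>+x. ennreal (gauss_density c x) \<partial>lborel) = ennreal 1"
  proof -
    have "(\<integral>\<^sup>+x. ennreal (gauss_density c x) \<partial>lborel)
      = (\<integral>\<^sup>+x. (\<Prod>b\<in>Basis. ennreal (normal_density (c \<bullet> b) 1 (x \<bullet> b))) \<partial>lborel)"
      by (simp add: gauss_prod prod_ennreal)
    also have "\<dots> = (\<Prod>b\<in>(Basis::(real^'n) set). (\<integral>\<^sup>+y. ennreal (normal_density (c \<bullet> b) 1 y) \<partial>lborel))"
      by (rule nn_integral_lborel_prod) auto
    also have "\<dots> = 1"
      by (simp add: nn_integral_eq_integral)
    finally show ?thesis by simp
  qed
qed (auto simp: gauss_nonneg)

lemma gauss_exp_hbi: "has_bochner_integral lborel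
   (\<lambda>x. exp ((norm (x - c))\<^sup>2 / 4) * gauss_density (c::real^'n) x) (sqrt 2 ^ CARD('n))"
proof (rule has_bochner_integral_nn_integral)
  show "(\<integral>\<^sup>+x. ennreal (exp ((norm (x - c))\<^sup>2 / 4) * gauss_density c x) \<partial>lborel) = ennreal (sqrt 2 ^ CARD('n))"
  proof -
    have "(\<integral>\<^sup>+x. ennreal (exp ((norm (x - c))\<^sup>2 / 4) * gauss_density c x) \<partial>lborel)
      = (\<integral>\<^sup>+x. (\<Prod>b\<in>Basis. ennreal (sqrt 2 * normal_density (c \<bullet> b) (sqrt 2) (x \<bullet> b))) \<partial>lborel)"
      by (simp only: gauss_exp_prod prod_ennreal normal_density_nonneg real_sqrt_ge_zero mult_nonneg_nonneg)
    also have "\<dots> = (\<Prod>b\<in>(Basis::(real^'n) set). (\<integral>\<^sup>+y. ennreal (sqrt 2 * normal_density (c \<bullet> b) (sqrt 2) y) \<partial>lborel))"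
      by (rule nn_integral_lborel_prod) auto
    also have "\<dots> = (\<Prod>b\<in>(Basis::(real^'n) set). ennreal (sqrt 2))"
      by (intro prod.cong refl, subst nn_integral_eq_integral) auto
    also have "\<dots> = ennreal (sqrt 2 ^ CARD('n))"
      by (simp add: card_Basis_vec ennreal_power)
    finally show ?thesis .
  qed
qed (auto simp: gauss_nonneg)

lemma tail_int:
  fixes c :: "real^'n"
  assumes [measurable]: "f \<in> borel_measurable borel"
    and nn: "\<And>x. 0 \<le> f x" and le: "\<And>x. f x \<le> M * exp ((norm (x - c))\<^sup>2 / 4)"
  shows "integrable lborel (\<lambda>x. f x * gauss_density c x)"
    and "(\<integral>x. f x * gauss_density c x \<partial>lborel) \<le> M * sqrt 2 ^ CARD('n)"
proof -
  have ih: "integrable lborel (\<lambda>x. M * (exp ((norm (x - c))\<^sup>2 / 4) * gauss_density c x))"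
    using gauss_exp_hbi[of c] by (intro integrable_mult_right) (simp add: has_bochner_integral_iff)
  have pt: "f x * gauss_density c x \<le> M * (exp ((norm (x - c))\<^sup>2 / 4) * gauss_density c x)" for x
    using mult_right_mono[OF le[of x] gauss_nonneg[of c x]] by (simp add: mult_ac)
  show i: "integrable lborel (\<lambda>x. f x * gauss_density c x)"
  proof (rule Bochner_Integration.integrable_bound[OF ih])
    show "AE x in lborel. norm (f x * gauss_density c x) \<le> norm (M * (exp ((norm (x - c))\<^sup>2 / 4) * gauss_density c x))"
      using pt nn gauss_nonneg by (auto intro!: AE_I2 simp: abs_of_nonneg) (smt (verit) mult_nonneg_nonneg nn gauss_nonneg)
  qed measurable
  have "(\<integral>x. f x * gauss_density c x \<partial>lborel) \<le> (\<integral>x. M * (exp ((norm (x - c))\<^sup>2 / 4) * gauss_density c x) \<partial>lborel)"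
    by (rule integral_mono[OF i ih pt])
  also have "\<dots> = M * sqrt 2 ^ CARD('n)"
    using gauss_exp_hbi[of c] by (simp add: has_bochner_integral_integral_eq)
  finally show "(\<integral>x. f x * gauss_density c x \<partial>lborel) \<le> M * sqrt 2 ^ CARD('n)" .
qed

lemma exp_bnd:
  fixes x c :: "real^'n"
  assumes "r \<ge> 0" "r\<^sup>2 = D" "norm (x - c) \<ge> 8 * r"
  shows "1 \<le> exp (-(16 * D)) * exp ((norm (x - c))\<^sup>2 / 4)"
proof -
  have "(8*r)\<^sup>2 \<le> (norm (x - c))\<^sup>2" using assms by (intro power_mono) auto
  hence "16 * D \<le> (norm (x - c))\<^sup>2 / 4" using assms by (simp add: power_mult_distrib)
  thus ?thesis by (simp add: exp_add[symmetric])
qed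

lemma mixture_integrable: "integrable lborel (mixture_density K (v :: nat \<Rightarrow> real^'n))"
  unfolding mixture_density_def
proof -
  have "integrable lborel (\<lambda>x. \<Sum>i<K. gauss_density (v i) x)"
    using gauss_hbi by (intro Bochner_Integration.integrable_sum) (auto simp: has_bochner_integral_iff)
  thus "integrable lborel (\<lambda>x. 1 / real K * (\<Sum>i<K. gauss_density (v i) x))" by simp
qed

lemma mixture_ind_integral:
  fixes v :: "nat \<Rightarrow> real^'n" and g :: "real^'n \<Rightarrow> real"
  assumes [measurable]: "g \<in> borel_measurable borel" and "\<And>x. 0 \<le> g x" "\<And>x. g x \<le> 1"
  shows "integrable lborel (\<lambda>x. g x * mixture_density K v x)"
    and "(\<integral>x. g x * mixture_density K v x \<partial>lborel) = (1 / real K) * (\<Sum>j<K. \<integral>x. g x * gauss_density (v j) x \<partial>lborel)"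
proof -
  have I: "integrable lborel (\<lambda>x. g x * gauss_density c x)" for c :: "real^'n"
  proof (rule Bochner_Integration.integrable_bound[of _ "gauss_density c"])
    show "integrable lborel (gauss_density c)" using gauss_hbi by (auto simp: has_bochner_integral_iff)
    show "AE x in lborel. norm (g x * gauss_density c x) \<le> norm (gauss_density c x)"
      using assms(2,3) gauss_nonneg by (auto intro!: AE_I2 simp: abs_mult abs_of_nonneg mult_left_le_one_le)
  qed measurable
  have eq: "(\<lambda>x. g x * mixture_density K v x) = (\<lambda>x. (1 / real K) * (\<Sum>j<K. g x * gauss_density (v j) x))"
    by (simp add: mixture_density_def sum_distrib_left mult_ac)
  show "integrable lborel (\<lambda>x. g x * mixture_density K v x)"
    unfolding eq using I by (intro integrable_mult_right integrable_sum) auto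
  show "(\<integral>x. g x * mixture_density K v x \<partial>lborel) = (1 / real K) * (\<Sum>j<K. \<integral>x. g x * gauss_density (v j) x \<partial>lborel)"
    unfolding eq using I by (simp add: integral_sum)
qed

theorem mainTheorem12:
  fixes K :: nat and ustar u :: "nat \<Rightarrow> real^'n"
  assumes "K \<ge> 2"
    and "\<And>i j. i < K \<Longrightarrow> j < K \<Longrightarrow> i \<noteq> j \<Longrightarrow>
           norm (ustar i - ustar j) \<ge> 100 * sqrt (real CARD('n) * ln (real K))"
    and "tv_dist (mixture_density K u) (mixture_density K ustar) \<le> 1 / (4 * real K)"
  shows "\<exists>\<pi>. \<pi> permutes {..<K} \<and>
           (\<forall>i<K. norm (ustar i - u (\<pi> i)) \<le> 16 * sqrt (real CARD('n) * ln (real K)))"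
proof -
  define d where "d = real CARD('n)"
  define L where "L = ln (real K)"
  define r where "r = sqrt (d * L)"
  have d1: "d \<ge> 1" unfolding d_def by simp
  have K2: "real K \<ge> 2" using assms(1) by simp
  have L2: "L \<ge> ln 2" unfolding L_def using K2 by simp
  have ln2: "ln (2::real) > 0" by simp
  have Lpos: "L > 0" using L2 ln2 by linarith
  have r0: "r > 0" unfolding r_def using d1 Lpos by simp
  have r2: "r\<^sup>2 = d * L" unfolding r_def using d1 Lpos by simp
  have key: "\<exists>j<K. norm (ustar i - u j) \<le> 16 * r" if iK: "i < K" for i
  proof (rule ccontr)
    assume "\<not> ?thesis"
    hence far: "\<And>j. j < K \<Longrightarrow> norm (ustar i - u j) > 16 * r" by force
    define A where "A = ball (ustar i) (8 * r)"
    define g :: "real^'n \<Rightarrow> real" where "g = indicator A"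
    define \<epsilon> where "\<epsilon> = exp (-(16 * (d * L))) * sqrt 2 ^ CARD('n)"
    have gm[measurable]: "g \<in> borel_measurable borel" unfolding g_def A_def by (intro borel_measurable_indicator) simp
    have g01: "0 \<le> g x" "g x \<le> 1" for x unfolding g_def by (auto simp: indicator_def)
    have gm1[measurable]: "(\<lambda>x. 1 - g x) \<in> borel_measurable borel" by measurable
    have t1: "(\<integral>x. (1 - g x) * gauss_density (ustar i) x \<partial>lborel) \<le> \<epsilon>"
      and i1: "integrable lborel (\<lambda>x. (1 - g x) * gauss_density (ustar i) x)"
    proof -
      have b: "1 - g x \<le> exp (-(16 * (d * L))) * exp ((norm (x - ustar i))\<^sup>2 / 4)" for x
      proof (cases "x \<in> A")
        case True thus ?thesis by (simp add: g_def)
      next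
        case False
        hence "norm (x - ustar i) \<ge> 8 * r" unfolding A_def by (simp add: dist_norm norm_minus_commute)
        from exp_bnd[OF less_imp_le[OF r0] r2 this] show ?thesis using g01(1)[of x] by linarith
      qed
      show "(\<integral>x. (1 - g x) * gauss_density (ustar i) x \<partial>lborel) \<le> \<epsilon>"
        unfolding \<epsilon>_def by (rule tail_int(2)[OF gm1 _ b]) (use g01 in auto)
      show "integrable lborel (\<lambda>x. (1 - g x) * gauss_density (ustar i) x)"
        by (rule tail_int(1)[OF gm1 _ b]) (use g01 in auto)
    qed
    have ig: "integrable lborel (\<lambda>x. g x * gauss_density c x)" for c :: "real^'n"
    proof (rule Bochner_Integration.integrable_bound[of _ "gauss_density c"])
      show "integrable lborel (gauss_density c)" using gauss_hbi by (auto simp: has_bochner_integral_iff)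
      show "AE x in lborel. norm (g x * gauss_density c x) \<le> norm (gauss_density c x)"
        using g01 gauss_nonneg by (auto intro!: AE_I2 simp: abs_mult abs_of_nonneg mult_left_le_one_le)
    qed measurable
    have F1: "(\<integral>x. g x * gauss_density (ustar i) x \<partial>lborel) \<ge> 1 - \<epsilon>"
    proof -
      have "(\<integral>x. (1 - g x) * gauss_density (ustar i) x \<partial>lborel)
          = (\<integral>x. gauss_density (ustar i) x - g x * gauss_density (ustar i) x \<partial>lborel)"
        by (simp add: algebra_simps)
      also have "\<dots> = 1 - (\<integral>x. g x * gauss_density (ustar i) x \<partial>lborel)"
        using gauss_hbi[of "ustar i"] ig[of "ustar i"]
        by (subst Bochner_Integration.integral_diff) (auto simp: has_bochner_integral_iff)
      finally show ?thesis using t1 by linarith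
    qed
    have F2: "(\<integral>x. g x * gauss_density (u j) x \<partial>lborel) \<le> \<epsilon>" if jK: "j < K" for j
    proof -
      have b: "g x \<le> exp (-(16 * (d * L))) * exp ((norm (x - u j))\<^sup>2 / 4)" for x
      proof (cases "x \<in> A")
        case False thus ?thesis by (simp add: g_def)
      next
        case True
        hence "norm (x - ustar i) < 8 * r" unfolding A_def by (simp add: dist_norm norm_minus_commute)
        moreover have "norm (ustar i - u j) \<le> norm (ustar i - x) + norm (x - u j)"
          using norm_triangle_ineq[of "ustar i - x" "x - u j"] by simp
        moreover note far[OF jK]
        ultimately have "norm (x - u j) \<ge> 8 * r" by (simp add: norm_minus_commute)
        from exp_bnd[OF less_imp_le[OF r0] r2 this] show ?thesis using g01(2)[of x] by linarith
      qed
      show ?thesis unfolding \<epsilon>_def by (rule tail_int(2)[OF gm _ b]) (use g01 in auto)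
    qed
    have nn: "0 \<le> (\<integral>x. g x * gauss_density c x \<partial>lborel)" for c :: "real^'n"
      using g01 gauss_nonneg by (intro integral_nonneg_AE AE_I2 mult_nonneg_nonneg) auto
    define p where "p = mixture_density K u"
    define q where "q = mixture_density K ustar"
    have Q: "(\<integral>x. g x * q x \<partial>lborel) \<ge> (1 - \<epsilon>) / real K"
    proof -
      have "(1 - \<epsilon>) \<le> (\<integral>x. g x * gauss_density (ustar i) x \<partial>lborel)" by (rule F1)
      also have "\<dots> \<le> (\<Sum>j<K. \<integral>x. g x * gauss_density (ustar j) x \<partial>lborel)"
        by (rule member_le_sum[of i "{..<K}" "\<lambda>j. \<integral>x. g x * gauss_density (ustar j) x \<partial>lborel", simplified])
           (use iK nn in auto)
      finally have "(1 - \<epsilon>) / real K \<le> (1 / real K) * (\<Sum>j<K. \<integral>x. g x * gauss_density (ustar j) x \<partial>lborel)"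
        using K2 by (simp add: divide_right_mono)
      thus ?thesis unfolding q_def using mixture_ind_integral(2)[OF gm g01] by simp
    qed
    have P: "(\<integral>x. g x * p x \<partial>lborel) \<le> \<epsilon>"
    proof -
      have "(\<Sum>j<K. \<integral>x. g x * gauss_density (u j) x \<partial>lborel) \<le> (\<Sum>j<K. \<epsilon>)"
        by (rule sum_mono) (use F2 in auto)
      hence "(1 / real K) * (\<Sum>j<K. \<integral>x. g x * gauss_density (u j) x \<partial>lborel) \<le> \<epsilon>"
        using K2 by (simp add: divide_le_eq mult_ac)
      thus ?thesis unfolding p_def using mixture_ind_integral(2)[OF gm g01] by simp
    qed
    have ip: "integrable lborel p" "integrable lborel q" unfolding p_def q_def by (rule mixture_integrable)+
    have igp: "integrable lborel (\<lambda>x. g x * p x)" "integrable lborel (\<lambda>x. g x * q x)"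
      unfolding p_def q_def by (rule mixture_ind_integral(1)[OF gm g01])+
    have "(\<integral>x. g x * q x \<partial>lborel) - (\<integral>x. g x * p x \<partial>lborel) = (\<integral>x. g x * q x - g x * p x \<partial>lborel)"
      using igp by simp
    also have "\<dots> \<le> (\<integral>x. \<bar>p x - q x\<bar> \<partial>lborel)"
    proof (rule integral_mono)
      show "integrable lborel (\<lambda>x. g x * q x - g x * p x)" using igp by simp
      show "integrable lborel (\<lambda>x. \<bar>p x - q x\<bar>)" using ip by simp
      fix x
      have "g x * (q x - p x) \<le> g x * \<bar>p x - q x\<bar>"
        by (rule mult_left_mono) (use g01 in auto)
      also have "\<dots> \<le> \<bar>p x - q x\<bar>" using g01[of x] by (intro mult_left_le_one_le) auto
      finally have "g x * (q x - p x) \<le> \<bar>p x - q x\<bar>" .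
      thus "g x * q x - g x * p x \<le> \<bar>p x - q x\<bar>" by (simp add: algebra_simps)
    qed
    finally have "(1 - \<epsilon>) / real K - \<epsilon> \<le> 2 * tv_dist p q"
      using P Q unfolding tv_dist_def by simp
    also have "\<dots> \<le> 2 * (1 / (4 * real K))" using assms(3) unfolding p_def q_def by simp
    finally have ineq: "(1 - \<epsilon>) / real K - \<epsilon> \<le> 1 / (2 * real K)" by simp
    hence h: "real K * 1 \<le> real K * (\<epsilon>*2 + \<epsilon>*(real K*2))" using K2 by (simp add: field_simps)
    have "1 \<le> \<epsilon>*2 + \<epsilon>*(real K*2)" using mult_le_cancel_left_pos[of "real K"] h K2 by simp
    hence "1/2 \<le> \<epsilon> * (real K + 1)" by (simp add: algebra_simps)
    moreover have "\<epsilon> * (real K + 1) < 1/2"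
    proof -
      have s2: "sqrt 2 ^ CARD('n) = exp (d * ln 2 / 2)"
      proof -
        have "sqrt 2 = exp (ln (sqrt 2))" by simp
        also have "\<dots> = exp (ln 2 / 2)" by (simp add: ln_sqrt)
        finally have "sqrt 2 ^ CARD('n) = exp (ln 2 / 2) ^ CARD('n)" by simp
        also have "\<dots> = exp (real CARD('n) * (ln 2 / 2))" by (simp only: exp_of_nat_mult)
        finally show ?thesis unfolding d_def by simp
      qed
      have K1: "real K + 1 \<le> exp (ln 2 + L)"
        unfolding L_def using K2 by (simp add: exp_add)
      have "\<epsilon> * (real K + 1) \<le> exp (-(16 * (d * L))) * exp (d * ln 2 / 2) * exp (ln 2 + L)"
        unfolding \<epsilon>_def s2 by (intro mult_left_mono K1) auto
      also have "\<dots> = exp (d * ln 2 / 2 + ln 2 + L * (1 - 16 * d))"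
        by (simp add: exp_add[symmetric] algebra_simps)
      also have "\<dots> < exp (- ln 2)"
      proof -
        have "L * (1 - 16 * d) \<le> ln 2 * (1 - 16 * d)"
          using L2 d1 by (intro mult_right_mono_neg) auto
        hence "d * ln 2 / 2 + ln 2 + L * (1 - 16 * d) < - ln 2"
        proof -
          have m: "ln 2 * 1 \<le> ln 2 * d" using d1 ln2 by (intro mult_left_mono) auto
          have e: "ln 2 * (1 - 16 * d) = ln 2 - 16 * (ln 2 * d)" by (simp add: algebra_simps)
          have e2: "d * ln 2 / 2 = (ln 2 * d) / 2" by simp
          show ?thesis using \<open>L * (1 - 16 * d) \<le> ln 2 * (1 - 16 * d)\<close> m ln2 unfolding e e2 by linarith
        qed
        thus ?thesis by simp
      qed
      also have "\<dots> = 1/2" by (simp add: exp_minus)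
      finally show ?thesis .
    qed
    ultimately show False by linarith
  qed
  define \<pi> where "\<pi> i = (if i < K then (SOME j. j < K \<and> norm (ustar i - u j) \<le> 16 * r) else i)" for i
  have Pi: "\<pi> i < K \<and> norm (ustar i - u (\<pi> i)) \<le> 16 * r" if "i < K" for i
    using someI_ex[OF key[OF that]] that unfolding \<pi>_def by auto
  have inj: "inj_on \<pi> {..<K}"
  proof (rule inj_onI)
    fix i i' assume i: "i \<in> {..<K}" and i': "i' \<in> {..<K}" and e: "\<pi> i = \<pi> i'"
    show "i = i'"
    proof (rule ccontr)
      assume ne: "i \<noteq> i'"
      have "norm (ustar i - ustar i') \<le> norm (ustar i - u (\<pi> i)) + norm (ustar i' - u (\<pi> i))"
        using norm_triangle_ineq[of "ustar i - u (\<pi> i)" "u (\<pi> i) - ustar i'"]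
        by (simp add: norm_minus_commute)
      also have "\<dots> \<le> 32 * r" using Pi[of i] Pi[of i'] i i' e by auto
      finally have "norm (ustar i - ustar i') \<le> 32 * r" .
      moreover have "norm (ustar i - ustar i') \<ge> 100 * r"
        using assms(2)[of i i'] i i' ne unfolding r_def d_def L_def by auto
      ultimately show False using r0 by linarith
    qed
  qed
  have img: "\<pi> ` {..<K} = {..<K}"
    by (rule endo_inj_surj[OF _ _ inj]) (use Pi in auto)
  have perm: "\<pi> permutes {..<K}"
  proof (rule bij_imp_permutes)
    show "bij_betw \<pi> {..<K} {..<K}" using inj img by (simp add: bij_betw_def)
    show "\<pi> x = x" if "x \<notin> {..<K}" for x using that by (simp add: \<pi>_def)
  qed
  show ?thesis
    using perm Pi unfolding r_def d_def L_def by blast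
qed

end
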